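(* Let $n\ge2$, $N\ge1$, $\Omega\subset\mathbb R^n$ open. Let $a:[0,\infty)\to[0,\infty)$ be of the form $a(t)=\widehat a(t^2)$ for some $\widehat a\in C^1([0,\infty))$, with $a(t)>0$ for $t>0$, and assume $i_a>-\tfrac12$. Then there exists a positive constant $C=C(n,N,i_a)$ such that, for every $\mathbf u=(u^1,\dots,u^N)\in C^3(\Omega,\mathbb R^N)$, $$\big|\mathrm{\mathbf{div}}(a(|\nabla\mathbf u|)\nabla\mathbf u)\big|^2\ge\sum_{j=1}^n\big(a(|\nabla\mathbf u|)^2\,\mathbf u_{x_j}\cdot\Delta\mathbf u\big)_{x_j}-\sum_{i=1}^n\Big(a(|\nabla\mathbf u|)^2\sum_{j=1}^n\mathbf u_{x_j}\cdot\mathbf u_{x_ix_j}\Big)_{x_i}+C\,a(|\nabla\mathbf u|)^2|\nabla^2\mathbf u|^2\quad\text{in }\Omega.$$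
   Context: $i_a=\inf_{t>0}\frac{ta'(t)}{a(t)}$. The dot denotes the scalar product in $\mathbb R^N$, and $|\nabla^2\mathbf u|=\big(\sum_{\alpha=1}^N\sum_{i,j=1}^n(u^\alpha_{x_ix_j})^2\big)^{1/2}$. *)

theory Defs
  imports "HOL-Analysis.Analysis"
begin

definition partial :: "'n::finite \<Rightarrow> (real^'n \<Rightarrow> 'b::real_normed_vector) \<Rightarrow> real^'n \<Rightarrow> 'b" where
  "partial j f x = vector_derivative (\<lambda>t. f (x + t *\<^sub>R axis j 1)) (at 0)"

fun Ck :: "nat \<Rightarrow> (real^'n::finite) set \<Rightarrow> (real^'n \<Rightarrow> 'b::real_normed_vector) \<Rightarrow> bool" where
  "Ck 0 U f = continuous_on U f"
| "Ck (Suc k) U f = ((\<forall>x\<in>U. f differentiable (at x)) \<and> (\<forall>j. Ck k U (partial j f)))"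

definition admissible_a :: "(real \<Rightarrow> real) \<Rightarrow> bool" where
  "admissible_a a \<longleftrightarrow>
     (\<exists>ah ah'. continuous_on {0..} ah' \<and>
        (\<forall>t\<ge>0. (ah has_real_derivative ah' t) (at t within {0..})) \<and>
        (\<forall>t\<ge>0. a t = ah (t\<^sup>2))) \<and>
     (\<forall>t\<ge>0. a t \<ge> 0) \<and> (\<forall>t>0. a t > 0)"

definition index_a :: "(real \<Rightarrow> real) \<Rightarrow> ereal" where
  "index_a a = (INF t\<in>{0<..}. ereal (t * deriv a t / a t))"

definition grad_norm :: "(real^'n::finite \<Rightarrow> real^'m::finite) \<Rightarrow> real^'n \<Rightarrow> real" where
  "grad_norm u x = sqrt (\<Sum>j\<in>UNIV. (norm (partial j u x))\<^sup>2)"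

definition laplacian :: "(real^'n::finite \<Rightarrow> real^'m::finite) \<Rightarrow> real^'n \<Rightarrow> real^'m" where
  "laplacian u x = (\<Sum>k\<in>UNIV. partial k (partial k u) x)"

definition hess_norm_sq :: "(real^'n::finite \<Rightarrow> real^'m::finite) \<Rightarrow> real^'n \<Rightarrow> real" where
  "hess_norm_sq u x = (\<Sum>i\<in>UNIV. \<Sum>j\<in>UNIV. (norm (partial i (partial j u) x))\<^sup>2)"

end

theory Submission
  imports Defs
begin

lemma partial_eq:
  assumes "((\<lambda>t. f (x + t *\<^sub>R axis j 1)) has_vector_derivative D) (at 0)"
  shows "partial j f x = D"
  using assms by (simp add: partial_def vector_derivative_at)

lemma partial_diff:
  fixes f :: "real^'n::finite \<Rightarrow> 'b::real_normed_vector"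
  assumes "f differentiable (at x)"
  shows "((\<lambda>t. f (x + t *\<^sub>R axis j 1)) has_vector_derivative partial j f x) (at 0)"
proof -
  have l: "(\<lambda>t::real. x + t *\<^sub>R axis j 1) differentiable (at 0)"
    by (intro derivative_intros)
  have "((\<lambda>t. f t) \<circ> (\<lambda>t::real. x + t *\<^sub>R axis j 1)) differentiable (at 0)"
    by (rule differentiable_chain_at[OF l]) (simp add: assms)
  hence "(\<lambda>t. f (x + t *\<^sub>R axis j 1)) differentiable (at 0)" by (simp add: o_def)
  thus ?thesis unfolding partial_def by (simp add: vector_derivative_works[symmetric])
qed

lemma line_shift:
  fixes f :: "'a::real_normed_vector \<Rightarrow> real"
  assumes "((\<lambda>t. f (y + t *\<^sub>R v)) has_real_derivative D) (at 0)" "y = x + s0 *\<^sub>R v"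
  shows "((\<lambda>s. f (x + s *\<^sub>R v)) has_real_derivative D) (at s0)"
proof -
  have e: "(\<lambda>t. (\<lambda>s. f (x + s *\<^sub>R v)) (t + s0)) = (\<lambda>t. f (y + t *\<^sub>R v))"
    using assms(2) by (simp add: algebra_simps scaleR_add_left)
  have "((\<lambda>s. f (x + s *\<^sub>R v)) has_real_derivative D) (at (0 + s0))"
    using assms(1) by (subst DERIV_shift) (simp add: e)
  thus ?thesis by simp
qed

lemma mvt_square:
  fixes \<phi> :: "'a::real_normed_vector \<Rightarrow> real"
  assumes S: "ball x r \<subseteq> S"
    and d1: "\<And>y. y \<in> S \<Longrightarrow> ((\<lambda>t. \<phi> (y + t *\<^sub>R v)) has_real_derivative Dv y) (at 0)"
    and d2: "\<And>y. y \<in> S \<Longrightarrow> ((\<lambda>t. Dv (y + t *\<^sub>R w)) has_real_derivative Dwv y) (at 0)"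
    and h: "h > 0" "2 * h < r" and nv: "norm v = 1" and nw: "norm w = 1"
  shows "\<exists>p. dist p x \<le> 2 * h \<and>
     \<phi> (x + h *\<^sub>R v + h *\<^sub>R w) - \<phi> (x + h *\<^sub>R v) - \<phi> (x + h *\<^sub>R w) + \<phi> x = h\<^sup>2 * Dwv p"
proof -
  have inS: "x + s *\<^sub>R v + t *\<^sub>R w \<in> S" if "0 \<le> s" "s \<le> h" "0 \<le> t" "t \<le> h" for s t
  proof -
    have "norm (s *\<^sub>R v + t *\<^sub>R w) \<le> norm (s *\<^sub>R v) + norm (t *\<^sub>R w)" by (rule norm_triangle_ineq)
    also have "\<dots> = s + t" using that nv nw by simp
    finally have "dist (x + s *\<^sub>R v + t *\<^sub>R w) x < r" using that h by (simp add: dist_norm)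
    thus ?thesis using S by (auto simp: dist_commute)
  qed
  define G where "G s = \<phi> (x + s *\<^sub>R v + h *\<^sub>R w) - \<phi> (x + s *\<^sub>R v)" for s
  have dG: "(G has_real_derivative (Dv (x + s *\<^sub>R v + h *\<^sub>R w) - Dv (x + s *\<^sub>R v))) (at s)"
    if "0 \<le> s" "s \<le> h" for s
  proof -
    have a: "((\<lambda>s. \<phi> ((x + h *\<^sub>R w) + s *\<^sub>R v)) has_real_derivative Dv (x + s *\<^sub>R v + h *\<^sub>R w)) (at s)"
      by (rule line_shift[OF d1]) (use inS[of s h] that h in \<open>auto simp: algebra_simps\<close>)
    have b: "((\<lambda>s. \<phi> (x + s *\<^sub>R v)) has_real_derivative Dv (x + s *\<^sub>R v)) (at s)"
      by (rule line_shift[OF d1]) (use inS[of s 0] that h in auto)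
    show ?thesis unfolding G_def using DERIV_diff[OF a b] by (simp add: algebra_simps)
  qed
  obtain \<sigma> where \<sigma>: "0 < \<sigma>" "\<sigma> < h" and eG: "G h - G 0 = (h - 0) * (Dv (x + \<sigma> *\<^sub>R v + h *\<^sub>R w) - Dv (x + \<sigma> *\<^sub>R v))"
    using MVT2[of 0 h G "\<lambda>s. Dv (x + s *\<^sub>R v + h *\<^sub>R w) - Dv (x + s *\<^sub>R v)"] dG h by auto
  define K where "K t = Dv (x + \<sigma> *\<^sub>R v + t *\<^sub>R w)" for t
  have dK: "(K has_real_derivative Dwv (x + \<sigma> *\<^sub>R v + t *\<^sub>R w)) (at t)" if "0 \<le> t" "t \<le> h" for t
    unfolding K_def
    by (rule line_shift[OF d2]) (use inS[of \<sigma> t] that \<sigma> in auto)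
  obtain \<tau> where \<tau>: "0 < \<tau>" "\<tau> < h" and eK: "K h - K 0 = (h - 0) * Dwv (x + \<sigma> *\<^sub>R v + \<tau> *\<^sub>R w)"
    using MVT2[of 0 h K "\<lambda>t. Dwv (x + \<sigma> *\<^sub>R v + t *\<^sub>R w)"] dK h by auto
  have "norm (\<sigma> *\<^sub>R v + \<tau> *\<^sub>R w) \<le> norm (\<sigma> *\<^sub>R v) + norm (\<tau> *\<^sub>R w)" by (rule norm_triangle_ineq)
  also have "\<dots> = \<sigma> + \<tau>" using \<sigma> \<tau> nv nw by simp
  finally have "dist (x + \<sigma> *\<^sub>R v + \<tau> *\<^sub>R w) x \<le> 2 * h" using \<sigma> \<tau> by (simp add: dist_norm)
  moreover have "\<phi> (x + h *\<^sub>R v + h *\<^sub>R w) - \<phi> (x + h *\<^sub>R v) - \<phi> (x + h *\<^sub>R w) + \<phi> x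
      = h\<^sup>2 * Dwv (x + \<sigma> *\<^sub>R v + \<tau> *\<^sub>R w)"
  proof -
    have "G h - G 0 = h * (K h - K 0)" using eG by (simp add: K_def)
    also have "\<dots> = h\<^sup>2 * Dwv (x + \<sigma> *\<^sub>R v + \<tau> *\<^sub>R w)" using eK by (simp add: power2_eq_square)
    finally show ?thesis by (simp add: G_def algebra_simps)
  qed
  ultimately show ?thesis by blast
qed

lemma clairaut_real:
  fixes \<phi> :: "'a::real_normed_vector \<Rightarrow> real"
  assumes S: "open S" "x \<in> S"
    and di: "\<And>y. y \<in> S \<Longrightarrow> ((\<lambda>t. \<phi> (y + t *\<^sub>R v)) has_real_derivative Di y) (at 0)"
    and dj: "\<And>y. y \<in> S \<Longrightarrow> ((\<lambda>t. \<phi> (y + t *\<^sub>R w)) has_real_derivative Dj y) (at 0)"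
    and dji: "\<And>y. y \<in> S \<Longrightarrow> ((\<lambda>t. Di (y + t *\<^sub>R w)) has_real_derivative Dji y) (at 0)"
    and dij: "\<And>y. y \<in> S \<Longrightarrow> ((\<lambda>t. Dj (y + t *\<^sub>R v)) has_real_derivative Dij y) (at 0)"
    and c1: "isCont Dji x" and c2: "isCont Dij x"
    and nv: "norm v = 1" and nw: "norm w = 1"
  shows "Dji x = Dij x"
proof (rule ccontr)
  assume ne: "Dji x \<noteq> Dij x"
  define e where "e = \<bar>Dji x - Dij x\<bar> / 2"
  have e: "e > 0" using ne by (simp add: e_def)
  obtain d1 where d1: "d1 > 0" "\<And>y. dist y x < d1 \<Longrightarrow> dist (Dji y) (Dji x) < e"
    using c1 e unfolding continuous_at_eps_delta by blast
  obtain d2 where d2: "d2 > 0" "\<And>y. dist y x < d2 \<Longrightarrow> dist (Dij y) (Dij x) < e"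
    using c2 e unfolding continuous_at_eps_delta by blast
  obtain r where r: "r > 0" "ball x r \<subseteq> S" using S open_contains_ball by blast
  define h where "h = min r (min d1 d2) / 4"
  have h: "h > 0" "2 * h < r" "2 * h < d1" "2 * h < d2" using r d1 d2 by (auto simp: h_def)
  obtain p where p: "dist p x \<le> 2 * h"
    "\<phi> (x + h *\<^sub>R v + h *\<^sub>R w) - \<phi> (x + h *\<^sub>R v) - \<phi> (x + h *\<^sub>R w) + \<phi> x = h\<^sup>2 * Dji p"
    using mvt_square[OF r(2) di dji h(1,2) nv nw] by blast
  obtain q where q: "dist q x \<le> 2 * h"
    "\<phi> (x + h *\<^sub>R w + h *\<^sub>R v) - \<phi> (x + h *\<^sub>R w) - \<phi> (x + h *\<^sub>R v) + \<phi> x = h\<^sup>2 * Dij q"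
    using mvt_square[OF r(2) dj dij h(1,2) nw nv] by blast
  have "h\<^sup>2 * Dji p = h\<^sup>2 * Dij q" using p(2) q(2) by (simp add: algebra_simps)
  hence pq: "Dji p = Dij q" using h by simp
  have "dist (Dji p) (Dji x) < e" using d1(2)[of p] p(1) h by simp
  moreover have "dist (Dij q) (Dij x) < e" using d2(2)[of q] q(1) h by simp
  ultimately show False using pq by (simp add: e_def dist_real_def abs_if split: if_splits)
qed

lemma vd_nth:
  assumes "(f has_vector_derivative D) (at t)"
  shows "((\<lambda>t. f t $ c) has_real_derivative D $ c) (at t)"
  using bounded_linear.has_vector_derivative[OF bounded_linear_vec_nth assms, of c]
  by (simp add: has_real_derivative_iff_has_vector_derivative)

lemma clairaut:
  fixes g :: "real^'n::finite \<Rightarrow> real^'m::finite"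
  assumes S: "open S" "x \<in> S"
    and d0: "\<And>y. y \<in> S \<Longrightarrow> g differentiable (at y)"
    and d1: "\<And>y k. y \<in> S \<Longrightarrow> partial k g differentiable (at y)"
    and c: "\<And>k l. isCont (partial k (partial l g)) x"
  shows "partial j (partial i g) x = partial i (partial j g) x"
proof -
  have "partial j (partial i g) x $ c = partial i (partial j g) x $ c" for c
  proof (rule clairaut_real[OF S, where \<phi>="\<lambda>y. g y $ c" and v="axis i 1" and w="axis j 1"
      and Di="\<lambda>y. partial i g y $ c" and Dj="\<lambda>y. partial j g y $ c"])
    fix y assume y: "y \<in> S"
    show "((\<lambda>t. g (y + t *\<^sub>R axis i 1) $ c) has_real_derivative partial i g y $ c) (at 0)"
      by (rule vd_nth[OF partial_diff[OF d0[OF y]]])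
    show "((\<lambda>t. g (y + t *\<^sub>R axis j 1) $ c) has_real_derivative partial j g y $ c) (at 0)"
      by (rule vd_nth[OF partial_diff[OF d0[OF y]]])
    show "((\<lambda>t. partial i g (y + t *\<^sub>R axis j 1) $ c) has_real_derivative partial j (partial i g) y $ c) (at 0)"
      by (rule vd_nth[OF partial_diff[OF d1[OF y]]])
    show "((\<lambda>t. partial j g (y + t *\<^sub>R axis i 1) $ c) has_real_derivative partial i (partial j g) y $ c) (at 0)"
      by (rule vd_nth[OF partial_diff[OF d1[OF y]]])
  next
    show "isCont (\<lambda>y. partial j (partial i g) y $ c) x"
      by (intro continuous_intros c)
    show "isCont (\<lambda>y. partial i (partial j g) y $ c) x"
      by (intro continuous_intros c)
  qed simp_all
  thus ?thesis by (simp add: vec_eq_iff)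
qed

lemma partial_cong_open:
  fixes f g :: "real^'n::finite \<Rightarrow> 'b::real_normed_vector"
  assumes S: "open S" "x \<in> S" and eq: "\<And>y. y \<in> S \<Longrightarrow> f y = g y"
    and d: "f differentiable (at x)"
  shows "partial k g x = partial k f x"
proof -
  obtain r where r: "r > 0" "ball x r \<subseteq> S" using S open_contains_ball by blast
  have "((\<lambda>t. g (x + t *\<^sub>R axis k 1)) has_vector_derivative partial k f x) (at 0)"
  proof (rule has_vector_derivative_transform_within_open[OF partial_diff[OF d] open_ball[of 0 r]])
    show "(0::real) \<in> ball 0 r" using r by simp
    fix t :: real assume "t \<in> ball 0 r"
    hence "x + t *\<^sub>R axis k 1 \<in> ball x r" by (simp add: dist_norm)
    thus "f (x + t *\<^sub>R axis k 1) = g (x + t *\<^sub>R axis k 1)" using r eq by blast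
  qed
  thus ?thesis by (rule partial_eq)
qed

lemma final_ineq:
  fixes A0 Hn sx V B ia :: real
  assumes "A0 \<ge> 0" "Hn \<ge> 0" "sx \<ge> 0" "V \<ge> 0" "V \<le> sx * Hn"
    and pos: "sx > 0 \<Longrightarrow> A0 > 0 \<and> ia \<le> 2 * sx * B / A0" and ia: "ia > - 1/2"
  shows "min 1 (1 + 2 * ia) * A0\<^sup>2 * Hn \<le> A0\<^sup>2 * Hn + 4 * A0 * B * V"
proof -
  have H0: "A0\<^sup>2 * Hn \<ge> 0" using assms by simp
  have m: "min 1 (1 + 2 * ia) * (A0\<^sup>2 * Hn) \<le> 1 * (A0\<^sup>2 * Hn)"
    by (rule mult_right_mono[OF _ H0]) simp
  show ?thesis
  proof (cases "sx = 0")
    case True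
    hence "V = 0" using assms by simp
    thus ?thesis using m by (simp add: mult.assoc)
  next
    case False
    hence sx: "sx > 0" using assms by simp
    with pos have A: "A0 > 0" and ib: "ia \<le> 2 * sx * B / A0" by auto
    show ?thesis
    proof (cases "B \<ge> 0")
      case True
      hence "4 * A0 * B * V \<ge> 0" using A assms by simp
      thus ?thesis using m by (simp add: mult.assoc)
    next
      case False
      have "4 * A0 * B \<le> 0" using False A by (simp add: mult_nonneg_nonpos)
      hence "4 * A0 * B * V \<ge> 4 * A0 * B * (sx * Hn)"
        using assms(5) by (simp add: mult_left_mono_neg)
      moreover have "4 * A0 * B * sx = 2 * A0\<^sup>2 * (2 * sx * B / A0)"
        using A by (simp add: field_simps power2_eq_square)
      moreover have "2 * A0\<^sup>2 * (2 * sx * B / A0) \<ge> 2 * A0\<^sup>2 * ia"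
        using ib A by (intro mult_left_mono) auto
      ultimately have "4 * A0 * B * V \<ge> 2 * A0\<^sup>2 * ia * Hn"
        using assms(2) by (smt (verit) mult.assoc mult_right_mono)
      moreover have "min 1 (1 + 2 * ia) * (A0\<^sup>2 * Hn) \<le> (1 + 2 * ia) * (A0\<^sup>2 * Hn)"
        by (rule mult_right_mono[OF _ H0]) simp
      ultimately show ?thesis by (simp add: algebra_simps)
    qed
  qed
qed

lemma cs_sum:
  fixes U H :: "'k \<Rightarrow> 'a::real_inner"
  shows "(\<Sum>k\<in>I. U k \<bullet> H k)\<^sup>2 \<le> (\<Sum>k\<in>I. U k \<bullet> U k) * (\<Sum>k\<in>I. (norm (H k))\<^sup>2)"
proof -
  have "\<bar>\<Sum>k\<in>I. U k \<bullet> H k\<bar> \<le> (\<Sum>k\<in>I. \<bar>U k \<bullet> H k\<bar>)" by (rule sum_abs)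
  also have "\<dots> \<le> (\<Sum>k\<in>I. norm (U k) * norm (H k))"
    by (intro sum_mono Cauchy_Schwarz_ineq2)
  finally have "(\<Sum>k\<in>I. U k \<bullet> H k)\<^sup>2 \<le> (\<Sum>k\<in>I. norm (U k) * norm (H k))\<^sup>2"
    by (metis abs_ge_zero power2_abs power_mono)
  also have "\<dots> \<le> (\<Sum>k\<in>I. (norm (U k))\<^sup>2) * (\<Sum>k\<in>I. (norm (H k))\<^sup>2)"
    by (rule Cauchy_Schwarz_ineq_sum)
  finally show ?thesis by (simp add: power2_norm_eq_inner)
qed

lemma deriv_a:
  assumes ah_der: "\<forall>t\<ge>0. (ah has_real_derivative ah' t) (at t within {0..})"
    and a_eq: "\<forall>t\<ge>0. a t = ah (t\<^sup>2)" and t: "t > 0"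
  shows "deriv a t = ah' (t\<^sup>2) * (2 * t)"
proof -
  have t2: "t\<^sup>2 > 0" using t by simp
  have "(ah has_real_derivative ah' (t\<^sup>2)) (at (t\<^sup>2) within {0<..})"
    by (rule has_field_derivative_subset[OF ah_der[rule_format]]) (use t2 in auto)
  hence d: "(ah has_real_derivative ah' (t\<^sup>2)) (at (t\<^sup>2))"
    using at_within_open[of "t\<^sup>2" "{0<..}"] t2 by simp
  have "((\<lambda>x. ah (x\<^sup>2)) has_real_derivative ah' (t\<^sup>2) * (2 * t)) (at t)"
    by (rule DERIV_chain2[of ah "ah' (t\<^sup>2)" "\<lambda>x. x\<^sup>2", OF d]) (auto intro!: derivative_eq_intros)
  hence "(a has_real_derivative ah' (t\<^sup>2) * (2 * t)) (at t)"
    by (rule has_field_derivative_transform_within_open[where S="{0<..}"]) (use t a_eq in auto)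
  thus ?thesis by (rule DERIV_imp_deriv)
qed

lemma Ck3_unfold:
  assumes "Ck 3 \<Omega> u"
  shows "\<And>y. y \<in> \<Omega> \<Longrightarrow> u differentiable (at y)"
    and "\<And>y j. y \<in> \<Omega> \<Longrightarrow> partial j u differentiable (at y)"
    and "\<And>y j k. y \<in> \<Omega> \<Longrightarrow> partial k (partial j u) differentiable (at y)"
    and "\<And>j k l. continuous_on \<Omega> (partial l (partial k (partial j u)))"
  using assms by (simp_all add: numeral_3_eq_3)

lemma symm3:
  fixes u :: "real^'n::finite \<Rightarrow> real^'m::finite"
  assumes O: "open \<Omega>" "x \<in> \<Omega>" and ck: "Ck 3 \<Omega> u"
  shows "partial j (partial k (partial k u)) x = partial k (partial k (partial j u)) x"
proof -
  note c = Ck3_unfold[OF ck]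
  have s2: "partial k (partial j u) y = partial j (partial k u) y" if "y \<in> \<Omega>" for y j k
  proof (rule clairaut[OF O(1) that c(1) c(2)])
    fix p q
    show "isCont (partial p (partial q u)) y"
      by (rule differentiable_imp_continuous_within[OF c(3)[OF that]])
  qed
  have a: "partial j (partial k (partial k u)) x = partial k (partial j (partial k u)) x"
  proof (rule clairaut[OF O c(2) c(3)])
    fix p q
    show "isCont (partial p (partial q (partial k u))) x"
      by (rule continuous_on_interior[OF c(4)]) (simp add: interior_open O)
  qed
  have b: "partial k (partial j (partial k u)) x = partial k (partial k (partial j u)) x"
    by (rule partial_cong_open[OF O, symmetric, OF s2 c(3)[OF O(2)]])
  show ?thesis using a b by simp
qed

lemma pointwise:
  fixes u :: "real^'n::finite \<Rightarrow> real^'m::finite"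
  assumes O: "open \<Omega>" "x \<in> \<Omega>" and ck: "Ck 3 \<Omega> u"
    and ah_der: "\<forall>t\<ge>0. (ah has_real_derivative ah' t) (at t within {0..})"
    and a_eq: "\<forall>t\<ge>0. a t = ah (t\<^sup>2)"
    and a_nn: "\<forall>t\<ge>0. a t \<ge> 0" and a_pos: "\<forall>t>0. a t > 0"
    and idx: "\<And>t. t > 0 \<Longrightarrow> ia \<le> t * deriv a t / a t"
    and ia: "ia > - 1/2"
  shows "(norm (\<Sum>j\<in>UNIV. partial j (\<lambda>y. a (grad_norm u y) *\<^sub>R partial j u y) x))\<^sup>2
        \<ge> (\<Sum>j\<in>UNIV. partial j (\<lambda>y. (a (grad_norm u y))\<^sup>2 * (partial j u y \<bullet> laplacian u y)) x)
          - (\<Sum>i\<in>UNIV. partial i (\<lambda>y. (a (grad_norm u y))\<^sup>2 *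
                 (\<Sum>j\<in>UNIV. partial j u y \<bullet> partial i (partial j u) y)) x)
          + min 1 (1 + 2 * ia) * (a (grad_norm u x))\<^sup>2 * hess_norm_sq u x"
proof -
  note c = Ck3_unfold[OF ck]
  define s where "s y = (\<Sum>k\<in>UNIV. partial k u y \<bullet> partial k u y)" for y
  define A where "A y = ah (s y)" for y
  have s_nn: "s y \<ge> 0" for y unfolding s_def by (intro sum_nonneg) simp
  have gs: "grad_norm u y = sqrt (s y)" for y
    unfolding grad_norm_def s_def by (simp add: power2_norm_eq_inner)
  have aA: "a (grad_norm u y) = A y" for y
    using a_eq s_nn[of y] by (simp add: gs A_def)
  define U where "U k = partial k u x" for k
  define H where "H i j = partial i (partial j u) x" for i j
  define L where "L = laplacian u x"
  define v where "v i = (\<Sum>k\<in>UNIV. U k \<bullet> H i k)" for i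
  define B where "B = ah' (s x)"
  define Ap where "Ap i = B * (2 * v i)" for i
  define A0 where "A0 = A x"
  define Hn where "Hn = hess_norm_sq u x"
  have hU: "((\<lambda>t. partial k u (x + t *\<^sub>R axis j 1)) has_vector_derivative H j k) (at 0)" for j k
    unfolding H_def by (rule partial_diff[OF c(2)[OF O(2)]])
  have hH: "((\<lambda>t. partial l (partial k u) (x + t *\<^sub>R axis j 1)) has_vector_derivative
      partial j (partial l (partial k u)) x) (at 0)" for j k l
    by (rule partial_diff[OF c(3)[OF O(2)]])
  have hL: "((\<lambda>t. laplacian u (x + t *\<^sub>R axis j 1)) has_vector_derivative
      (\<Sum>k\<in>UNIV. partial j (partial k (partial k u)) x)) (at 0)" for j
    unfolding laplacian_def by (intro has_vector_derivative_sum hH)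
  have hs: "((\<lambda>t. s (x + t *\<^sub>R axis j 1)) has_real_derivative 2 * v j) (at 0)" for j
  proof -
    have "((\<lambda>t. s (x + t *\<^sub>R axis j 1)) has_vector_derivative
        (\<Sum>k\<in>UNIV. U k \<bullet> H j k + H j k \<bullet> U k)) (at 0)"
      unfolding s_def
      using bounded_bilinear.has_vector_derivative[OF bounded_bilinear_inner hU hU]
      by (intro has_vector_derivative_sum) (simp add: U_def)
    moreover have "(\<Sum>k\<in>UNIV. U k \<bullet> H j k + H j k \<bullet> U k) = 2 * v j"
      by (simp add: v_def inner_commute sum.distrib sum_distrib_left)
    ultimately show ?thesis by (simp add: has_real_derivative_iff_has_vector_derivative)
  qed
  have hA: "((\<lambda>t. A (x + t *\<^sub>R axis j 1)) has_real_derivative Ap j) (at 0)" for j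
  proof -
    let ?g = "\<lambda>t. s (x + t *\<^sub>R axis j 1)"
    have "(ah has_real_derivative B) (at (?g 0) within (?g ` UNIV))"
      unfolding scale_zero_left add_0_right B_def by (rule has_field_derivative_subset[OF ah_der[rule_format, OF s_nn[of x]]])
        (auto simp: B_def s_nn)
    from DERIV_image_chain[OF this hs[of j]] show ?thesis
      by (simp add: A_def Ap_def o_def)
  qed
  have P1: "partial j (\<lambda>y. A y *\<^sub>R partial j u y) x = Ap j *\<^sub>R U j + A0 *\<^sub>R H j j" for j
  proof -
    have "((\<lambda>t. (\<lambda>y. A y *\<^sub>R partial j u y) (x + t *\<^sub>R axis j 1)) has_vector_derivative
        (Ap j *\<^sub>R U j + A0 *\<^sub>R H j j)) (at 0)"
      using has_vector_derivative_scaleR[OF hA hU[of j j]] by (simp add: A0_def U_def add.commute)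
    thus ?thesis by (rule partial_eq)
  qed
  have hA2: "((\<lambda>t. (A (x + t *\<^sub>R axis j 1))\<^sup>2) has_real_derivative 2 * A0 * Ap j) (at 0)" for j
    using DERIV_mult[OF hA[of j] hA[of j]] by (simp add: power2_eq_square A0_def algebra_simps)
  have P2: "partial j (\<lambda>y. (A y)\<^sup>2 * (partial j u y \<bullet> laplacian u y)) x
      = 2 * A0 * Ap j * (U j \<bullet> L) + A0\<^sup>2 * (H j j \<bullet> L + U j \<bullet> (\<Sum>k\<in>UNIV. partial j (partial k (partial k u)) x))" for j
  proof -
    have hI: "((\<lambda>t. partial j u (x + t *\<^sub>R axis j 1) \<bullet> laplacian u (x + t *\<^sub>R axis j 1)) has_real_derivative
        (U j \<bullet> (\<Sum>k\<in>UNIV. partial j (partial k (partial k u)) x) + H j j \<bullet> L)) (at 0)"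
      using bounded_bilinear.has_vector_derivative[OF bounded_bilinear_inner hU[of j j] hL[of j]]
      by (simp add: has_real_derivative_iff_has_vector_derivative U_def L_def)
    have "((\<lambda>t. (\<lambda>y. (A y)\<^sup>2 * (partial j u y \<bullet> laplacian u y)) (x + t *\<^sub>R axis j 1)) has_vector_derivative
      2 * A0 * Ap j * (U j \<bullet> L) + A0\<^sup>2 * (H j j \<bullet> L + U j \<bullet> (\<Sum>k\<in>UNIV. partial j (partial k (partial k u)) x))) (at 0)"
      using DERIV_mult[OF hA2[of j] hI]
      by (simp add: has_real_derivative_iff_has_vector_derivative[symmetric] A0_def U_def L_def algebra_simps)
    thus ?thesis by (rule partial_eq)
  qed
  have P3: "partial i (\<lambda>y. (A y)\<^sup>2 * (\<Sum>j\<in>UNIV. partial j u y \<bullet> partial i (partial j u) y)) x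
      = 2 * A0 * Ap i * v i + A0\<^sup>2 * (\<Sum>j\<in>UNIV. H i j \<bullet> H i j + U j \<bullet> partial i (partial i (partial j u)) x)" for i
  proof -
    have hI: "((\<lambda>t. \<Sum>j\<in>UNIV. partial j u (x + t *\<^sub>R axis i 1) \<bullet> partial i (partial j u) (x + t *\<^sub>R axis i 1)) has_real_derivative
        (\<Sum>j\<in>UNIV. H i j \<bullet> H i j + U j \<bullet> partial i (partial i (partial j u)) x)) (at 0)"
      unfolding has_real_derivative_iff_has_vector_derivative
    proof (intro has_vector_derivative_sum)
      fix j :: 'n
      show "((\<lambda>t. partial j u (x + t *\<^sub>R axis i 1) \<bullet> partial i (partial j u) (x + t *\<^sub>R axis i 1)) has_vector_derivative
        (H i j \<bullet> H i j + U j \<bullet> partial i (partial i (partial j u)) x)) (at 0)"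
        using bounded_bilinear.has_vector_derivative[OF bounded_bilinear_inner hU[of j i] hH[of i j i]]
        by (simp add: U_def H_def add.commute)
    qed
    have "((\<lambda>t. (\<lambda>y. (A y)\<^sup>2 * (\<Sum>j\<in>UNIV. partial j u y \<bullet> partial i (partial j u) y)) (x + t *\<^sub>R axis i 1)) has_vector_derivative
      2 * A0 * Ap i * v i + A0\<^sup>2 * (\<Sum>j\<in>UNIV. H i j \<bullet> H i j + U j \<bullet> partial i (partial i (partial j u)) x)) (at 0)"
      using DERIV_mult[OF hA2[of i] hI]
      by (simp add: has_real_derivative_iff_has_vector_derivative[symmetric] A0_def U_def H_def v_def algebra_simps)
    thus ?thesis by (rule partial_eq)
  qed
  define W where "W = (\<Sum>j\<in>UNIV. Ap j *\<^sub>R U j)"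
  define V where "V = (\<Sum>i\<in>UNIV. (v i)\<^sup>2)"
  define T where "T j k = partial j (partial k (partial k u)) x" for j k
  define T' where "T' i j = partial i (partial i (partial j u)) x" for i j
  have LH: "L = (\<Sum>j\<in>UNIV. H j j)" by (simp add: L_def laplacian_def H_def)
  have Hn: "Hn = (\<Sum>i\<in>UNIV. \<Sum>j\<in>UNIV. H i j \<bullet> H i j)"
    by (simp add: Hn_def hess_norm_sq_def H_def power2_norm_eq_inner)
  have E1: "(\<Sum>j\<in>UNIV. Ap j *\<^sub>R U j + A0 *\<^sub>R H j j) = W + A0 *\<^sub>R L"
    by (simp add: W_def LH sum.distrib scaleR_sum_right)
  have E1n: "(norm (W + A0 *\<^sub>R L))\<^sup>2 = W \<bullet> W + 2 * A0 * (W \<bullet> L) + A0\<^sup>2 * (L \<bullet> L)"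
    unfolding power2_norm_eq_inner by (simp add: inner_add_left inner_add_right inner_commute power2_eq_square algebra_simps)
  have E2: "(\<Sum>j\<in>UNIV. 2 * A0 * Ap j * (U j \<bullet> L) + A0\<^sup>2 * (H j j \<bullet> L + U j \<bullet> (\<Sum>k\<in>UNIV. partial j (partial k (partial k u)) x)))
      = 2 * A0 * (W \<bullet> L) + A0\<^sup>2 * (L \<bullet> L) + A0\<^sup>2 * (\<Sum>j\<in>UNIV. \<Sum>k\<in>UNIV. U j \<bullet> T j k)"
  proof -
    have "W \<bullet> L = (\<Sum>j\<in>UNIV. Ap j * (U j \<bullet> L))" by (simp add: W_def inner_sum_left)
    moreover have "L \<bullet> L = (\<Sum>j\<in>UNIV. H j j \<bullet> L)" by (simp add: LH inner_sum_left)
    moreover have "(\<Sum>k\<in>UNIV. U j \<bullet> T j k) = U j \<bullet> (\<Sum>k\<in>UNIV. partial j (partial k (partial k u)) x)" for j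
      by (simp add: T_def inner_sum_right)
    ultimately show ?thesis
      by (simp add: sum.distrib sum_distrib_left algebra_simps)
  qed
  have E3: "(\<Sum>i\<in>UNIV. 2 * A0 * Ap i * v i + A0\<^sup>2 * (\<Sum>j\<in>UNIV. H i j \<bullet> H i j + U j \<bullet> partial i (partial i (partial j u)) x))
      = 4 * A0 * B * V + A0\<^sup>2 * Hn + A0\<^sup>2 * (\<Sum>i\<in>UNIV. \<Sum>j\<in>UNIV. U j \<bullet> T' i j)"
    by (simp add: Hn V_def Ap_def T'_def sum.distrib sum_distrib_left algebra_simps power2_eq_square)
  have E4: "(\<Sum>j\<in>UNIV. \<Sum>k\<in>UNIV. U j \<bullet> T j k) = (\<Sum>i\<in>UNIV. \<Sum>j\<in>UNIV. U j \<bullet> T' i j)"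
  proof -
    have "(\<Sum>j\<in>UNIV. \<Sum>k\<in>UNIV. U j \<bullet> T j k) = (\<Sum>j\<in>UNIV. \<Sum>k\<in>UNIV. U j \<bullet> T' k j)"
      unfolding T_def T'_def by (intro sum.cong refl arg_cong[where f="inner (U _)"] symm3[OF O ck])
    also have "\<dots> = (\<Sum>i\<in>UNIV. \<Sum>j\<in>UNIV. U j \<bullet> T' i j)" by (rule sum.swap)
    finally show ?thesis .
  qed
  have sx: "s x = (\<Sum>k\<in>UNIV. U k \<bullet> U k)" by (simp add: s_def U_def)
  have VH: "V \<le> s x * Hn"
  proof -
    have "V \<le> (\<Sum>i\<in>UNIV. s x * (\<Sum>k\<in>UNIV. (norm (H i k))\<^sup>2))"
      unfolding V_def v_def sx by (intro sum_mono cs_sum)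
    thus ?thesis by (simp add: Hn sum_distrib_left power2_norm_eq_inner)
  qed
  have A0a: "A0 = a (sqrt (s x))" using aA[of x] gs[of x] by (simp add: A0_def)
  have key: "min 1 (1 + 2 * ia) * A0\<^sup>2 * Hn \<le> A0\<^sup>2 * Hn + 4 * A0 * B * V"
  proof (rule final_ineq[OF _ _ s_nn _ VH _ ia])
    show "0 \<le> A0" using A0a a_nn s_nn[of x] by simp
    show "0 \<le> Hn" unfolding Hn by (intro sum_nonneg) simp
    show "0 \<le> V" unfolding V_def by (intro sum_nonneg) simp
    assume sp: "0 < s x"
    let ?t = "sqrt (s x)"
    have t: "?t > 0" using sp by simp
    have A0p: "A0 > 0" using A0a a_pos t by simp
    have "deriv a ?t = B * (2 * ?t)" using deriv_a[OF ah_der a_eq t] sp by (simp add: B_def)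
    hence "?t * deriv a ?t / a ?t = 2 * s x * B / A0"
      using sp A0a by (simp add: algebra_simps)
    thus "0 < A0 \<and> ia \<le> 2 * s x * B / A0" using idx[OF t] A0p by simp
  qed
  have WW: "W \<bullet> W \<ge> 0" by simp
  show ?thesis
    unfolding aA P1 P2 P3 E1 E1n E2 E3 E4 A0_def[symmetric] Hn_def[symmetric]
    using key WW by linarith
qed

theorem lemma3p3:
  fixes ia :: real
  assumes n2: "CARD('n::finite) \<ge> 2"
    and ia: "ia > - 1/2"
  shows "\<exists>C>0. \<forall>(a::real \<Rightarrow> real) (\<Omega>::(real^'n) set) (u::real^'n \<Rightarrow> real^'m::finite).
     admissible_a a \<and> index_a a = ereal ia \<and> open \<Omega> \<and> Ck 3 \<Omega> u \<longrightarrow>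
     (\<forall>x\<in>\<Omega>.
        (norm (\<Sum>j\<in>UNIV. partial j (\<lambda>y. a (grad_norm u y) *\<^sub>R partial j u y) x))\<^sup>2
        \<ge> (\<Sum>j\<in>UNIV. partial j (\<lambda>y. (a (grad_norm u y))\<^sup>2 * (partial j u y \<bullet> laplacian u y)) x)
          - (\<Sum>i\<in>UNIV. partial i (\<lambda>y. (a (grad_norm u y))\<^sup>2 *
                 (\<Sum>j\<in>UNIV. partial j u y \<bullet> partial i (partial j u) y)) x)
          + C * (a (grad_norm u x))\<^sup>2 * hess_norm_sq u x)"
proof (intro exI[of _ "min 1 (1 + 2 * ia)"] conjI allI impI ballI)
  show "0 < min 1 (1 + 2 * ia)" using ia by simp
  fix a :: "real \<Rightarrow> real" and \<Omega> :: "(real^'n) set" and u :: "real^'n \<Rightarrow> real^'m" and x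
  assume H: "admissible_a a \<and> index_a a = ereal ia \<and> open \<Omega> \<and> Ck 3 \<Omega> u" and x: "x \<in> \<Omega>"
  obtain ah ah' where ah: "\<forall>t\<ge>0. (ah has_real_derivative ah' t) (at t within {0..})"
    "\<forall>t\<ge>0. a t = ah (t\<^sup>2)"
    using H unfolding admissible_a_def by blast
  have O: "open \<Omega>" and ck: "Ck 3 \<Omega> u" using H by auto
  have nn: "\<forall>t\<ge>0. a t \<ge> 0" and pos: "\<forall>t>0. a t > 0" using H unfolding admissible_a_def by auto
  have idx: "ia \<le> t * deriv a t / a t" if "t > 0" for t
  proof -
    have "ereal ia \<le> ereal (t * deriv a t / a t)"
    proof -
      have "t \<in> {0<..}" using that by simp
      hence "(INF t\<in>{0<..}. ereal (t * deriv a t / a t)) \<le> ereal (t * deriv a t / a t)" by (rule INF_lower)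
      thus ?thesis using H unfolding index_a_def by simp
    qed
    thus ?thesis by simp
  qed
  show "(\<Sum>j\<in>UNIV. partial j (\<lambda>y. (a (grad_norm u y))\<^sup>2 * (partial j u y \<bullet> laplacian u y)) x)
          - (\<Sum>i\<in>UNIV. partial i (\<lambda>y. (a (grad_norm u y))\<^sup>2 *
                 (\<Sum>j\<in>UNIV. partial j u y \<bullet> partial i (partial j u) y)) x)
          + min 1 (1 + 2 * ia) * (a (grad_norm u x))\<^sup>2 * hess_norm_sq u x
        \<le> (norm (\<Sum>j\<in>UNIV. partial j (\<lambda>y. a (grad_norm u y) *\<^sub>R partial j u y) x))\<^sup>2"
    using pointwise[OF O x ck ah(1) ah(2) nn pos idx ia] .
qed

end
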